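(* Let $E_2=R[w_2,w_3,\dots]$ be the $E_2$ page described in the context, set $W_+=k[b_{10}^{\pm1}][w_2,w_3,\dots]$ and $W_-=h_{10}W_+$, so $E_2=W_+\oplus W_-$. Let $x\in E_2$ be a nonzero element lying in a single filtration $s$ and a single degree $u'=u-6(s+t)$. If $u'\equiv 0\pmod 4$, then $x\in W_+$ and $s\equiv -u'\pmod 9$. Otherwise $u'\equiv 2\pmod 4$, in which case $x\in W_-$ and $s\equiv 7-u'\pmod 9$.
   Context: $k=\mathbb{F}_3$, $R=E[h_{10}]\otimes k[b_{10}^{\pm1}]$. The spectral sequence is the $b_{10}$-localized $K(\xi_1)$-based Adams spectral sequence converging to $b_{10}^{-1}\operatorname{Ext}_P(\mathbb{F}_3,\mathbb{F}_3)$ ($P$ the dual reduced powers at $p=3$), trigraded by filtration $s$, internal homological degree $t$ and internal topological degree $u$, with $E_2\cong R[w_2,w_3,\dots]$ a polynomial $R$-algebra. Degrees: $h_{10}$ has $(s,t,u)=(0,1,4)$, $b_{10}$ has $(0,2,12)$, $w_n$ ($n\geq2$) has $(1,1,2(3^n+1))$. Hence $u'(h_{10})=-2$, $u'(b_{10})=0$, $u'(w_n)=2(3^n-5)$. *)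

theory Defs
  imports Main "HOL-Library.Poly_Mapping" "HOL-Library.Numeral_Type" "HOL-Number_Theory.Cong"
begin

text \<open>Monomials of E_2 = E[h10] (x) k[b10^(+-1)] (x) k[w_2,w_3,...]:
  a triple (e, j, a) stands for h10^e b10^j prod_n w_n^(a n),
  where e : bool (exponent of h10, 0 or 1), j : int, and a : nat =>0 nat
  is a finitely supported exponent vector with support in {2..}.\<close>

type_synonym mon = "bool \<times> int \<times> (nat \<Rightarrow>\<^sub>0 nat)"

definition valid_mon :: "mon \<Rightarrow> bool" where
  "valid_mon m = (\<forall>n\<in>Poly_Mapping.keys (snd (snd m)). 2 \<le> n)"

definition E2 :: "(mon \<Rightarrow>\<^sub>0 3) set" where
  "E2 = {x. \<forall>m\<in>Poly_Mapping.keys x. valid_mon m}"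

definition deg_s :: "mon \<Rightarrow> int" where
  "deg_s m = (\<Sum>n\<in>Poly_Mapping.keys (snd (snd m)). int (Poly_Mapping.lookup (snd (snd m)) n))"

definition deg_t :: "mon \<Rightarrow> int" where
  "deg_t m = (if fst m then 1 else 0) + 2 * fst (snd m)
             + (\<Sum>n\<in>Poly_Mapping.keys (snd (snd m)). int (Poly_Mapping.lookup (snd (snd m)) n))"

definition deg_u :: "mon \<Rightarrow> int" where
  "deg_u m = (if fst m then 4 else 0) + 12 * fst (snd m)
             + (\<Sum>n\<in>Poly_Mapping.keys (snd (snd m)). int (Poly_Mapping.lookup (snd (snd m)) n) * (2 * (3 ^ n + 1)))"

definition deg_u' :: "mon \<Rightarrow> int" where
  "deg_u' m = deg_u m - 6 * (deg_s m + deg_t m)"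

definition W_plus :: "(mon \<Rightarrow>\<^sub>0 3) set" where
  "W_plus = {x\<in>E2. \<forall>m\<in>Poly_Mapping.keys x. \<not> fst m}"

definition W_minus :: "(mon \<Rightarrow>\<^sub>0 3) set" where
  "W_minus = {x\<in>E2. \<forall>m\<in>Poly_Mapping.keys x. fst m}"

end

theory Submission
  imports Defs
begin

lemma pow3_form:
  assumes "2 \<le> n"
  shows "\<exists>q::int. 2 * (3 ^ n + 1) = 36 * q + (20::int)"
proof -
  obtain r where r: "n = r + 2" using assms by (metis add.commute le_Suc_ex)
  have "odd ((3::int) ^ r)" by simp
  then obtain c where c: "(3::int) ^ r = 2 * c + 1" by (metis oddE)
  have "(3::int) ^ n = 9 * 3 ^ r" by (simp add: r power_add)
  hence "2 * ((3::int) ^ n + 1) = 36 * c + 20" using c by simp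
  thus ?thesis by blast
qed

lemma mon_key:
  assumes "valid_mon m"
  shows "\<exists>k::int. deg_u' m = 8 * deg_s m - 2 * (if fst m then 1 else 0) + 36 * k"
proof -
  define a where "a = snd (snd m)"
  define K where "K = Poly_Mapping.keys a"
  define f where "f = (\<lambda>n. int (Poly_Mapping.lookup a n))"
  define U where "U = (\<Sum>n\<in>K. f n * (2 * (3 ^ n + 1)))"
  have S: "deg_s m = (\<Sum>n\<in>K. f n)" by (simp add: deg_s_def a_def K_def f_def)
  have u: "deg_u m = (if fst m then 4 else 0) + 12 * fst (snd m) + U"
    by (simp add: deg_u_def U_def a_def K_def f_def)
  have t: "deg_t m = (if fst m then 1 else 0) + 2 * fst (snd m) + deg_s m"
    by (simp add: deg_t_def deg_s_def)
  have cg: "[U = (\<Sum>n\<in>K. f n * 20)] (mod 36)"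
    unfolding U_def
  proof (rule cong_sum)
    fix n assume "n \<in> K"
    hence "2 \<le> n" using assms by (auto simp: valid_mon_def K_def a_def)
    then obtain q where q: "2 * (3 ^ n + 1) = 36 * q + (20::int)" using pow3_form by blast
    show "[f n * (2 * (3 ^ n + 1)) = f n * 20] (mod 36)"
      unfolding q by (simp add: cong_iff_dvd_diff algebra_simps)
  qed
  have s20: "(\<Sum>n\<in>K. f n * 20) = 20 * deg_s m"
    unfolding S sum_distrib_right[symmetric] by simp
  have "36 dvd (U - 20 * deg_s m)"
    using cg unfolding s20 by (simp only: cong_iff_dvd_diff)
  then obtain k where k: "U - 20 * deg_s m = 36 * k" by (elim dvdE)
  have "deg_u' m = 8 * deg_s m - 2 * (if fst m then 1 else 0) + 36 * k"
    unfolding deg_u'_def u t using k by (cases "fst m") simp_all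
  thus ?thesis by blast
qed

theorem lemma2p2:
  fixes x :: "mon \<Rightarrow>\<^sub>0 3" and s u' :: int
  assumes "x \<in> E2" and "x \<noteq> 0"
    and "\<forall>m\<in>Poly_Mapping.keys x. deg_s m = s \<and> deg_u' m = u'"
  shows "(u' mod 4 = 0 \<longrightarrow> x \<in> W_plus \<and> [s = - u'] (mod 9))
       \<and> (u' mod 4 \<noteq> 0 \<longrightarrow> u' mod 4 = 2 \<and> x \<in> W_minus \<and> [s = 7 - u'] (mod 9))"
proof -
  have per: "\<exists>k::int. u' = 8 * s - 2 * (if fst m then 1 else 0) + 36 * k" if "m \<in> Poly_Mapping.keys x" for m
    using mon_key[of m] assms(1,3) that by (auto simp: E2_def)
  have F: "fst m \<longleftrightarrow> u' mod 4 = 2" if "m \<in> Poly_Mapping.keys x" for m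
    using per[OF that] by (cases "fst m") (auto, arith+)
  have N: "\<not> fst m \<longleftrightarrow> u' mod 4 = 0" if "m \<in> Poly_Mapping.keys x" for m
    using per[OF that] by (cases "fst m") (auto, arith+)
  obtain m0 where m0: "m0 \<in> Poly_Mapping.keys x" using assms(2)
    by (metis all_not_in_conv keys_eq_empty)
  show ?thesis
  proof (cases "fst m0")
    case True
    then obtain k where k: "u' = 8 * s - 2 + 36 * k" using per[OF m0] by auto
    have "u' mod 4 = 2" using F m0 True by blast
    moreover have "[s = 7 - u'] (mod 9)" unfolding cong_iff_dvd_diff k
      by (rule dvdI[where k="s - 1 + 4*k"]) (simp add: algebra_simps)
    moreover have "x \<in> W_minus" using F \<open>u' mod 4 = 2\<close> assms(1) by (auto simp: W_minus_def)
    ultimately show ?thesis by simp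
  next
    case False
    then obtain k where k: "u' = 8 * s + 36 * k" using per[OF m0] by auto
    have "u' mod 4 = 0" using N m0 False by blast
    moreover have "[s = - u'] (mod 9)" unfolding cong_iff_dvd_diff k
      by (rule dvdI[where k="s + 4*k"]) (simp add: algebra_simps)
    moreover have "x \<in> W_plus" using N \<open>u' mod 4 = 0\<close> assms(1) by (auto simp: W_plus_def)
    ultimately show ?thesis by simp
  qed
qed

end
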